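(* For any fixed parameters $p_0>0$, $r>1$ and any fixed (bid-independent) processing order of the bidders, the multiplicative price update algorithm, applied to the declared types, is a truthful mechanism without money and with verification for CAs with unknown $k$-minded bidders.
   Context: Multi-unit combinatorial auction: a set $\mathsf U$ of $m$ goods, each with supply $b\ge1$; $n$ bidders. True type of bidder $i$: $t_i=(v_i,\mathcal S_i)$ with $\mathcal S_i$ a private collection of $k$ nonempty subsets of $\mathsf U$ and $v_i:\mathcal S_i\to\mathbb R_{\ge0}$ private, extended by $v_i(T)=\max\{v_i(S'):S'\in\mathcal S_i,S'\subseteq T\}$ ($0$ if none). Declarations $c=(w,\mathcal W)$ have the same form; $D_i$ is the set of all declarations. Multiplicative price update algorithm on declarations $(w_i,\mathcal W_i)$: $p_e^1=p_0$ for every good; for each bidder $i$ in the fixed order: let $S_i$ maximize $w_i(S)$ among $S\in\mathcal W_i$ with $w_i(S)\ge\sum_{e\in S}p_e^i$ ($S_i=\emptyset$ if none); multiply the price of each $e\in S_i$ by $r$; allocate $S_i$ to $i$. Verification: bidder $i$ with true type $t_i$ facing $\mathbf b_{-i}$ may declare $b_i=(z,\mathcal T)$ only if $z(A_i(b_i,\mathbf b_{-i}))\le v_i(A_i(b_i,\mathbf b_{-i}))$. A mechanism $A$ is truthful without money and with verification if for all $i$, $\mathbf b_{-i}$, true types $t_i$ and declarations $b_i$ permitted by verification, $v_i(A_i(t_i,\mathbf b_{-i}))\ge v_i(A_i(b_i,\mathbf b_{-i}))$. *)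

theory Defs
  imports Complex_Main
begin

text \<open>A declaration (or a type) of a bidder is a pair (w, W): W is a collection of
  bundles (subsets of the goods) and w gives the value of each bundle in W
  (values of w outside W are irrelevant).\<close>
type_synonym 'g decl = "('g set \<Rightarrow> real) \<times> 'g set set"

definition valid_decl :: "'g set \<Rightarrow> nat \<Rightarrow> 'g decl \<Rightarrow> bool" where
  "valid_decl U k d \<longleftrightarrow>
     snd d \<subseteq> Pow U \<and> finite (snd d) \<and> card (snd d) = k \<and> {} \<notin> snd d \<and>
     (\<forall>S\<in>snd d. fst d S \<ge> 0)"

definition ext_val :: "'g decl \<Rightarrow> 'g set \<Rightarrow> real" where
  "ext_val d T =
     (if \<exists>S\<in>snd d. S \<subseteq> T then Max {fst d S | S. S \<in> snd d \<and> S \<subseteq> T} else 0)"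

definition bundle_price :: "('g \<Rightarrow> real) \<Rightarrow> 'g set \<Rightarrow> real" where
  "bundle_price p S = (\<Sum>e\<in>S. p e)"

definition affordable :: "'g decl \<Rightarrow> ('g \<Rightarrow> real) \<Rightarrow> 'g set set" where
  "affordable d p = {S \<in> snd d. fst d S \<ge> bundle_price p S}"

definition choose_bundle :: "'g decl \<Rightarrow> ('g \<Rightarrow> real) \<Rightarrow> 'g set" where
  "choose_bundle d p =
     (if affordable d p = {} then {}
      else (SOME S. S \<in> affordable d p \<and> (\<forall>S'\<in>affordable d p. fst d S' \<le> fst d S)))"

fun mpu_run :: "real \<Rightarrow> (nat \<Rightarrow> 'g decl) \<Rightarrow> nat list \<Rightarrow> ('g \<Rightarrow> real) \<Rightarrow> nat \<Rightarrow> 'g set" where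
  "mpu_run r bids [] p = (\<lambda>i. {})"
| "mpu_run r bids (i # is) p =
     (let S = choose_bundle (bids i) p
      in (mpu_run r bids is (\<lambda>e. if e \<in> S then r * p e else p e))(i := S))"

definition mpu_alloc :: "real \<Rightarrow> real \<Rightarrow> nat list \<Rightarrow> (nat \<Rightarrow> 'g decl) \<Rightarrow> nat \<Rightarrow> 'g set" where
  "mpu_alloc p0 r ord bids = mpu_run r bids ord (\<lambda>e. p0)"

definition truthful_verif ::
  "'g set \<Rightarrow> nat \<Rightarrow> nat \<Rightarrow> ((nat \<Rightarrow> 'g decl) \<Rightarrow> nat \<Rightarrow> 'g set) \<Rightarrow> bool" where
  "truthful_verif U k n A \<longleftrightarrow>
     (\<forall>i<n. \<forall>bids t d.
        (\<forall>j<n. j \<noteq> i \<longrightarrow> valid_decl U k (bids j)) \<longrightarrow>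
        valid_decl U k t \<longrightarrow> valid_decl U k d \<longrightarrow>
        ext_val d (A (bids(i := d)) i) \<le> ext_val t (A (bids(i := d)) i) \<longrightarrow>
        ext_val t (A (bids(i := t)) i) \<ge> ext_val t (A (bids(i := d)) i))"

end

theory Submission
  imports Defs
begin

lemma ev_ge:
  assumes "valid_decl U k t" "S \<in> snd t" "S \<subseteq> T"
  shows "fst t S \<le> ext_val t T"
proof -
  have fin: "finite {fst t S | S. S \<in> snd t \<and> S \<subseteq> T}"
  proof (rule finite_subset)
    show "{fst t S | S. S \<in> snd t \<and> S \<subseteq> T} \<subseteq> fst t ` snd t" by blast
    show "finite (fst t ` snd t)" using assms(1) unfolding valid_decl_def by simp
  qed
  show ?thesis unfolding ext_val_def using assms(2,3)
    by (auto intro!: Max_ge[OF fin])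
qed

lemma ev_nonneg:
  assumes "valid_decl U k t" shows "0 \<le> ext_val t T"
proof (cases "\<exists>S\<in>snd t. S \<subseteq> T")
  case True
  then obtain S where "S \<in> snd t" "S \<subseteq> T" by blast
  moreover have "0 \<le> fst t S" using assms \<open>S \<in> snd t\<close> unfolding valid_decl_def by auto
  ultimately show ?thesis using ev_ge[OF assms, of S T] by linarith
next
  case False then show ?thesis unfolding ext_val_def by simp
qed

lemma ev_pos:
  assumes "valid_decl U k t" "ext_val t T > 0"
  shows "\<exists>S\<in>snd t. S \<subseteq> T \<and> ext_val t T = fst t S"
proof -
  have ex: "\<exists>S\<in>snd t. S \<subseteq> T"
  proof (rule ccontr)
    assume "\<not> ?thesis" hence "ext_val t T = 0" unfolding ext_val_def by simp
    thus False using assms(2) by simp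
  qed
  have fin: "finite {fst t S | S. S \<in> snd t \<and> S \<subseteq> T}"
  proof (rule finite_subset)
    show "{fst t S | S. S \<in> snd t \<and> S \<subseteq> T} \<subseteq> fst t ` snd t" by blast
    show "finite (fst t ` snd t)" using assms(1) unfolding valid_decl_def by simp
  qed
  have ne: "{fst t S | S. S \<in> snd t \<and> S \<subseteq> T} \<noteq> {}" using ex by auto
  have "Max {fst t S | S. S \<in> snd t \<and> S \<subseteq> T} \<in> {fst t S | S. S \<in> snd t \<and> S \<subseteq> T}"
    using Max_in[OF fin ne] .
  then obtain S where "S \<in> snd t" "S \<subseteq> T" "Max {fst t S | S. S \<in> snd t \<and> S \<subseteq> T} = fst t S" by blast
  moreover have "ext_val t T = Max {fst t S | S. S \<in> snd t \<and> S \<subseteq> T}" using ex unfolding ext_val_def by simp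
  ultimately show ?thesis by metis
qed

lemma choose_props:
  assumes "valid_decl U k d" "affordable d p \<noteq> {}"
  shows "choose_bundle d p \<in> affordable d p \<and> (\<forall>S'\<in>affordable d p. fst d S' \<le> fst d (choose_bundle d p))"
proof -
  have fin: "finite (affordable d p)" using assms(1) unfolding valid_decl_def affordable_def by auto
  have fin2: "finite (fst d ` affordable d p)" using fin by simp
  have "Max (fst d ` affordable d p) \<in> fst d ` affordable d p" using Max_in[OF fin2] assms(2) by auto
  then obtain S where S: "S \<in> affordable d p" "fst d S = Max (fst d ` affordable d p)" by auto
  have "\<forall>S'\<in>affordable d p. fst d S' \<le> fst d S" using S(2) Max_ge[OF fin2] by auto
  hence "\<exists>S. S \<in> affordable d p \<and> (\<forall>S'\<in>affordable d p. fst d S' \<le> fst d S)" using S by blast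
  from someI_ex[OF this] show ?thesis unfolding choose_bundle_def using assms(2) by simp
qed


lemma run_local:
  assumes "i \<in> set xs" "distinct xs" "\<forall>e. q e > 0" "r > 1"
  shows "\<exists>p. (\<forall>e. p e > 0) \<and> (\<forall>d. mpu_run r (bids(i:=d)) xs q i = choose_bundle d p)"
  using assms
proof (induction xs arbitrary: q)
  case Nil then show ?case by simp
next
  case (Cons x xs)
  show ?case
  proof (cases "x = i")
    case True
    then show ?thesis using Cons.prems by (auto simp: Let_def)
  next
    case False
    define S where "S = choose_bundle (bids x) q"
    define q' where "q' = (\<lambda>e. if e \<in> S then r * q e else q e)"
    have q': "\<forall>e. q' e > 0" using Cons.prems unfolding q'_def by auto
    obtain p where p: "\<forall>e. p e > 0" "\<forall>d. mpu_run r (bids(i:=d)) xs q' i = choose_bundle d p"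
    proof -
      have a: "i \<in> set xs" using Cons.prems False by auto
      have b: "distinct xs" using Cons.prems by simp
      show ?thesis using that Cons.IH[OF a b q' Cons.prems(4)] by blast
    qed
    have "mpu_run r (bids(i:=d)) (x#xs) q i = choose_bundle d p" for d
    proof -
      have bx: "(bids(i:=d)) x = bids x" using False by simp
      have "mpu_run r (bids(i:=d)) (x#xs) q i = mpu_run r (bids(i:=d)) xs q' i"
        unfolding mpu_run.simps(2) Let_def bx S_def[symmetric] q'_def[symmetric]
        using False by (simp only: fun_upd_other not_sym)
      then show ?thesis using p(2) by simp
    qed
    then show ?thesis using p(1) by blast
  qed
qed

lemma key:
  assumes "finite U" "valid_decl U k t" "valid_decl U k d" "\<forall>e. p e > 0"
    "ext_val d (choose_bundle d p) \<le> ext_val t (choose_bundle d p)"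
  shows "ext_val t (choose_bundle d p) \<le> ext_val t (choose_bundle t p)"
proof (cases "affordable d p = {}")
  case True
  hence "choose_bundle d p = {}" unfolding choose_bundle_def by simp
  moreover have "ext_val t {} = 0" using assms(2) unfolding ext_val_def valid_decl_def by auto
  ultimately show ?thesis using ev_nonneg[OF assms(2)] by simp
next
  case False
  define S' where "S' = choose_bundle d p"
  have S': "S' \<in> affordable d p" using choose_props[OF assms(3) False] S'_def by auto
  hence S'd: "S' \<in> snd d" "fst d S' \<ge> bundle_price p S'" unfolding affordable_def by auto
  have "S' \<subseteq> U" "S' \<noteq> {}" using S'd(1) assms(3) unfolding valid_decl_def by auto
  hence finS: "finite S'" using assms(1) finite_subset by blast
  have pos: "bundle_price p S' > 0" unfolding bundle_price_def
    using sum_pos[OF finS \<open>S' \<noteq> {}\<close>] assms(4) by auto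
  have "fst d S' \<le> ext_val d S'" using ev_ge[OF assms(3) S'd(1)] by simp
  moreover have v5: "ext_val d S' \<le> ext_val t S'" using assms(5) unfolding S'_def .
  ultimately have gt: "ext_val t S' > 0" using pos S'd(2) by linarith
  obtain T where T: "T \<in> snd t" "T \<subseteq> S'" "ext_val t S' = fst t T" using ev_pos[OF assms(2) gt] by blast
  have "bundle_price p T \<le> bundle_price p S'" unfolding bundle_price_def
    using sum_mono2[OF finS T(2)] assms(4) less_imp_le by blast
  moreover have "fst t T \<ge> bundle_price p S'" using T(3) v5 S'd(2) \<open>fst d S' \<le> ext_val d S'\<close> by linarith
  ultimately have Ta: "T \<in> affordable t p" using T(1) unfolding affordable_def by auto
  hence ne: "affordable t p \<noteq> {}" by auto
  note C = choose_props[OF assms(2) ne]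
  have "fst t T \<le> fst t (choose_bundle t p)" using C Ta by blast
  also have "\<dots> \<le> ext_val t (choose_bundle t p)"
    using ev_ge[OF assms(2)] C unfolding affordable_def by auto
  finally show ?thesis using T(3) S'_def by simp
qed

theorem theorem4:
  fixes U :: "'g set" and n k :: nat and p0 r :: real and ord :: "nat list"
  assumes "finite U" and "p0 > 0" and "r > 1"
    and "distinct ord" and "set ord = {..<n}"
  shows "truthful_verif U k n (mpu_alloc p0 r ord)"
  unfolding truthful_verif_def
proof (intro allI impI)
  fix i bids t d
  assume i: "i < n" and v: "valid_decl U k t" "valid_decl U k d"
    and ver: "ext_val d (mpu_alloc p0 r ord (bids(i := d)) i)
              \<le> ext_val t (mpu_alloc p0 r ord (bids(i := d)) i)"
  obtain p where p: "\<forall>e. p e > 0" "\<forall>d. mpu_run r (bids(i:=d)) ord (\<lambda>e. p0) i = choose_bundle d p"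
    using run_local[of i ord "\<lambda>e. p0" r bids] assms i by auto
  show "ext_val t (mpu_alloc p0 r ord (bids(i := d)) i)
        \<le> ext_val t (mpu_alloc p0 r ord (bids(i := t)) i)"
  proof -
    have ed: "mpu_run r (bids(i:=d)) ord (\<lambda>e. p0) i = choose_bundle d p" using p(2) by blast
    have et: "mpu_run r (bids(i:=t)) ord (\<lambda>e. p0) i = choose_bundle t p" using p(2) by blast
    show ?thesis using key[OF assms(1) v p(1)] ver unfolding mpu_alloc_def ed et by blast
  qed
qed

end
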